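(* Let $\mathcal C$ be a convex curve whose radius of curvature satisfies $\rho\ge R_1$ at every point, for some constant $R_1>0$, and whose total curvature satisfies $\int_{\mathcal C}\kappa\,ds\le \pi$. Let $\mathcal L$ be a lattice in $\mathbb R^2$. If $$\frac{\mathrm{Length}(\mathcal C)}{(A_{\mathcal L} R_1)^{1/3}}\le 2,$$ then $\mathcal C$ contains at most two points of $\mathcal L$.
   Context: A lattice is a set $\mathcal L=\mathcal L(v_0,v_1,v_2)=\{v_0+mv_1+nv_2: m,n\in\mathbb Z\}$ where $v_0,v_1,v_2\in\mathbb R^2$ and $v_1,v_2$ are linearly independent (points need not have integer coordinates). Its invariant is $A_{\mathcal L}=|\det(v_1,v_2)|$, the absolute value of the determinant of the $2\times2$ matrix with columns $v_1,v_2$. All curves are of class $C^2$ with nonvanishing first and second derivative vectors, oriented so that the curvature $\kappa$ is positive; a convex curve is such a curve (lying on the boundary of a convex planar region). The radius of curvature is $\rho=1/\kappa$, $s$ is arclength, and the total curvature of $\mathcal C$ is $\int_{\mathcal C}\kappa\,ds$, the total change of the tangent angle along $\mathcal C$. *)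

theory Defs
  imports "HOL-Analysis.Analysis"
begin

definition det2 :: "real^2 \<Rightarrow> real^2 \<Rightarrow> real" where
  "det2 u v = u$1 * v$2 - u$2 * v$1"

definition lattice :: "real^2 \<Rightarrow> real^2 \<Rightarrow> real^2 \<Rightarrow> (real^2) set" where
  "lattice v0 v1 v2 = {v0 + of_int m *\<^sub>R v1 + of_int n *\<^sub>R v2 | m n. True}"

definition lattice_invariant :: "real^2 \<Rightarrow> real^2 \<Rightarrow> real" where
  "lattice_invariant v1 v2 = \<bar>det2 v1 v2\<bar>"

definition vd1 :: "(real \<Rightarrow> real^2) \<Rightarrow> real \<Rightarrow> real \<Rightarrow> real \<Rightarrow> real^2" where
  "vd1 \<gamma> a b t = vector_derivative \<gamma> (at t within {a..b})"

definition vd2 :: "(real \<Rightarrow> real^2) \<Rightarrow> real \<Rightarrow> real \<Rightarrow> real \<Rightarrow> real^2" where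
  "vd2 \<gamma> a b t = vector_derivative (vd1 \<gamma> a b) (at t within {a..b})"

definition C2_regular_curve :: "(real \<Rightarrow> real^2) \<Rightarrow> real \<Rightarrow> real \<Rightarrow> bool" where
  "C2_regular_curve \<gamma> a b \<longleftrightarrow> a < b \<and>
     (\<forall>t\<in>{a..b}. \<gamma> differentiable (at t within {a..b}) \<and>
                  vd1 \<gamma> a b differentiable (at t within {a..b})) \<and>
     continuous_on {a..b} (vd2 \<gamma> a b) \<and>
     (\<forall>t\<in>{a..b}. vd1 \<gamma> a b t \<noteq> 0 \<and> vd2 \<gamma> a b t \<noteq> 0)"

definition curvature :: "(real \<Rightarrow> real^2) \<Rightarrow> real \<Rightarrow> real \<Rightarrow> real \<Rightarrow> real" where
  "curvature \<gamma> a b t = det2 (vd1 \<gamma> a b t) (vd2 \<gamma> a b t) / norm (vd1 \<gamma> a b t) ^ 3"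

definition convex_curve :: "(real \<Rightarrow> real^2) \<Rightarrow> real \<Rightarrow> real \<Rightarrow> bool" where
  "convex_curve \<gamma> a b \<longleftrightarrow> C2_regular_curve \<gamma> a b \<and>
     (\<forall>t\<in>{a..b}. curvature \<gamma> a b t > 0) \<and>
     (\<exists>K::(real^2) set. convex K \<and> \<gamma> ` {a..b} \<subseteq> frontier K)"

definition curve_length :: "(real \<Rightarrow> real^2) \<Rightarrow> real \<Rightarrow> real \<Rightarrow> real" where
  "curve_length \<gamma> a b = integral {a..b} (\<lambda>t. norm (vd1 \<gamma> a b t))"

definition total_curvature :: "(real \<Rightarrow> real^2) \<Rightarrow> real \<Rightarrow> real \<Rightarrow> real" where
  "total_curvature \<gamma> a b = integral {a..b} (\<lambda>t. curvature \<gamma> a b t * norm (vd1 \<gamma> a b t))"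

end

theory Submission
  imports Defs
begin

lemma sin_lt: assumes "0 < x" shows "sin x < (x::real)"
proof (cases "x \<le> pi")
  case True
  have "(\<lambda>y. y - sin y) 0 < (\<lambda>y. y - sin y) x"
  proof (rule DERIV_pos_imp_increasing_open[OF assms])
    fix y :: real assume y: "0 < y" "y < x"
    have "cos y < cos 0" using cos_monotone_0_pi[of 0 y] y True by simp
    then show "\<exists>d. ((\<lambda>y. y - sin y) has_real_derivative d) (at y) \<and> d > 0"
      by (intro exI[of _ "1 - cos y"]) (auto intro!: derivative_eq_intros)
  qed (intro continuous_intros)
  then show ?thesis by simp
next
  case False
  then show ?thesis using sin_le_one[of x] pi_gt3 by linarith
qed

lemma within_cont:
  assumes "\<forall>t\<in>{a..b}. (f has_vector_derivative f' t) (at t within {a..b})"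
  shows "continuous_on {a..b} f"
  using assms has_vector_derivative_continuous continuous_on_eq_continuous_within by blast

lemma within_at:
  assumes "\<forall>t\<in>{a..b}. (f has_vector_derivative f' t) (at t within {a..b})" "t \<in> {a<..<b}"
  shows "(f has_vector_derivative f' t) (at t)"
proof -
  have "t \<in> interior {a..b}" using assms(2) by simp
  then have "at t within {a..b} = at t" by (rule at_within_interior)
  then show ?thesis using assms by (metis greaterThanLessThan_iff atLeastAtMost_iff less_imp_le)
qed

lemma incr_strict:
  fixes f f' :: "real \<Rightarrow> real"
  assumes "s < u" "continuous_on {s..u} f" "\<And>t. s < t \<Longrightarrow> t < u \<Longrightarrow> (f has_real_derivative f' t) (at t)"
    "\<And>t. s < t \<Longrightarrow> t < u \<Longrightarrow> f' t > 0"
  shows "f s < f u"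
  by (rule DERIV_pos_imp_increasing_open[OF assms(1)]) (use assms in auto)

lemma incr_weak:
  fixes f f' :: "real \<Rightarrow> real"
  assumes "s \<le> u" "continuous_on {s..u} f" "\<And>t. s < t \<Longrightarrow> t < u \<Longrightarrow> (f has_real_derivative f' t) (at t)"
    "\<And>t. s < t \<Longrightarrow> t < u \<Longrightarrow> f' t \<ge> 0"
  shows "f s \<le> f u"
  by (rule DERIV_nonneg_imp_increasing_open[OF assms(1)]) (use assms in auto)

lemma alg_bound:
  fixes l1 l2 L R :: real
  assumes "0 < l1" "0 < l2" "l1 + l2 \<le> L" "0 < R"
  shows "l1*l2*(l1+l2)/(2*R) \<le> L^3/(8*R)"
proof -
  have "4*(l1*l2) \<le> (l1+l2)^2" using sum_squares_ge_zero[of "l1-l2" 0] by (simp add: power2_eq_square algebra_simps)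
  then have "l1*l2*(l1+l2) \<le> (l1+l2)^2/4*(l1+l2)" using assms by (intro mult_right_mono) auto
  also have "\<dots> = (l1+l2)^3/4" by (simp add: power2_eq_square power3_eq_cube)
  also have "\<dots> \<le> L^3/4" using assms by (intro divide_right_mono power_mono) auto
  finally have "l1*l2*(l1+l2) \<le> L^3/4" .
  then have "l1*l2*(l1+l2)/(2*R) \<le> (L^3/4)/(2*R)" using assms by (intro divide_right_mono) auto
  then show ?thesis by simp
qed

lemma core:
  fixes p q x y x2 y2 :: "real \<Rightarrow> real" and a b R t1 t2 t3 :: real
  assumes ab: "a < b" and R: "R > 0"
  and cp: "continuous_on {a..b} p" and cq: "continuous_on {a..b} q"
  and cx: "continuous_on {a..b} x" and cy: "continuous_on {a..b} y"
  and cx2: "continuous_on {a..b} x2" and cy2: "continuous_on {a..b} y2"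
  and dp: "\<And>t. t\<in>{a<..<b} \<Longrightarrow> (p has_real_derivative x t) (at t)"
  and dq: "\<And>t. t\<in>{a<..<b} \<Longrightarrow> (q has_real_derivative y t) (at t)"
  and dx: "\<And>t. t\<in>{a<..<b} \<Longrightarrow> (x has_real_derivative x2 t) (at t)"
  and dy: "\<And>t. t\<in>{a<..<b} \<Longrightarrow> (y has_real_derivative y2 t) (at t)"
  and nz: "\<And>t. t\<in>{a..b} \<Longrightarrow> x t^2 + y t^2 > 0"
  and kpos: "\<And>t. t\<in>{a..b} \<Longrightarrow> 0 < x t*y2 t - y t*x2 t"
  and kle: "\<And>t. t\<in>{a..b} \<Longrightarrow> (x t*y2 t - y t*x2 t)/(x t^2+y t^2) \<le> sqrt(x t^2+y t^2)/R"
  and tot: "integral {a..b} (\<lambda>t. (x t*y2 t - y t*x2 t)/(x t^2+y t^2)) \<le> pi"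
  and t: "a \<le> t1" "t1 < t2" "t2 < t3" "t3 \<le> b"
  shows "0 < (p t2 - p t1)*(q t3 - q t2) - (q t2 - q t1)*(p t3 - p t2) \<and>
         (p t2 - p t1)*(q t3 - q t2) - (q t2 - q t1)*(p t3 - p t2)
            < (integral {a..b} (\<lambda>t. sqrt(x t^2+y t^2)))^3/(8*R)"
proof -
  define r where "r = (\<lambda>t. sqrt(x t^2 + y t^2))"
  define k where "k = (\<lambda>t. (x t*y2 t - y t*x2 t)/(x t^2+y t^2))"
  have rpos: "\<And>t. t\<in>{a..b} \<Longrightarrow> r t > 0" using nz by (simp add: r_def)
  have r2: "\<And>t. t\<in>{a..b} \<Longrightarrow> (r t)^2 = x t^2 + y t^2" using nz by (simp add: r_def less_imp_le)
  have cr: "continuous_on {a..b} r" unfolding r_def by (intro continuous_intros cx cy)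
  have nz0: "\<forall>t\<in>{a..b}. x t^2 + y t^2 \<noteq> 0" using nz by (metis less_irrefl)
  have ck: "continuous_on {a..b} k" unfolding k_def
    by (rule continuous_on_divide) (intro continuous_intros cx cy cx2 cy2 nz0)+
  define \<sigma> where "\<sigma> = (\<lambda>u. integral {a..u} r)"
  have d\<sigma>w: "\<forall>t\<in>{a..b}. (\<sigma> has_vector_derivative r t) (at t within {a..b})"
    unfolding \<sigma>_def using integral_has_vector_derivative[OF cr] by blast
  have "(x a / r a)^2 + (y a / r a)^2 = (x a^2 + y a^2)/(r a)^2"
    by (simp add: power_divide add_divide_distrib)
  also have "\<dots> = 1"
  proof -
    have ra: "(r a)^2 = x a^2 + y a^2" "r a > 0" using r2[of a] rpos[of a] ab by auto
    show ?thesis by (subst ra(1)[symmetric]) (use ra(2) in simp)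
  qed
  finally have "(x a / r a)^2 + (y a / r a)^2 = 1" .
  then obtain \<theta>0 where th0: "x a / r a = cos \<theta>0" "y a / r a = sin \<theta>0"
    by (metis sincos_total_2pi)
  define \<theta> where "\<theta> = (\<lambda>u. \<theta>0 + integral {a..u} k)"
  have d\<theta>w: "\<forall>t\<in>{a..b}. (\<theta> has_vector_derivative k t) (at t within {a..b})"
  proof
    fix t assume "t \<in> {a..b}"
    then have "((\<lambda>u. integral {a..u} k) has_real_derivative k t) (at t within {a..b})"
      using integral_has_vector_derivative[OF ck] has_real_derivative_iff_has_vector_derivative by blast
    then show "(\<theta> has_vector_derivative k t) (at t within {a..b})"
      unfolding \<theta>_def has_real_derivative_iff_has_vector_derivative[symmetric]
      by (auto intro!: derivative_eq_intros)
  qed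
  have c\<sigma>: "continuous_on {a..b} \<sigma>" by (rule within_cont[OF d\<sigma>w])
  have c\<theta>: "continuous_on {a..b} \<theta>" by (rule within_cont[OF d\<theta>w])
  have d\<sigma>: "\<And>t. t\<in>{a<..<b} \<Longrightarrow> (\<sigma> has_real_derivative r t) (at t)"
    using within_at[OF d\<sigma>w] has_real_derivative_iff_has_vector_derivative by blast
  have d\<theta>: "\<And>t. t\<in>{a<..<b} \<Longrightarrow> (\<theta> has_real_derivative k t) (at t)"
    using within_at[OF d\<theta>w] has_real_derivative_iff_has_vector_derivative by blast
  have kpos': "\<And>t. t\<in>{a..b} \<Longrightarrow> k t > 0" unfolding k_def using kpos nz by auto
  have \<sigma>_lt: "\<sigma> s < \<sigma> u" if "a \<le> s" "s < u" "u \<le> b" for s u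
    by (rule incr_strict[OF that(2), of _ r]) (use that in \<open>auto intro!: d\<sigma> rpos continuous_on_subset[OF c\<sigma>]\<close>)
  have \<theta>_lt: "\<theta> s < \<theta> u" if "a \<le> s" "s < u" "u \<le> b" for s u
    by (rule incr_strict[OF that(2), of _ k]) (use that in \<open>auto intro!: d\<theta> kpos' continuous_on_subset[OF c\<theta>]\<close>)
  have \<theta>\<sigma>: "\<theta> u - \<theta> s \<le> (\<sigma> u - \<sigma> s)/R" if "a \<le> s" "s \<le> u" "u \<le> b" for s u
  proof -
    have "(\<lambda>t. \<sigma> t / R - \<theta> t) s \<le> (\<lambda>t. \<sigma> t / R - \<theta> t) u"
    proof (rule incr_weak[OF that(2), of _ "\<lambda>t. r t / R - k t"])
      show "continuous_on {s..u} (\<lambda>t. \<sigma> t / R - \<theta> t)"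
        by (intro continuous_intros continuous_on_subset[OF c\<sigma>] continuous_on_subset[OF c\<theta>]) (use that R in auto)
    next
      fix t assume "s < t" "t < u"
      then have tt: "t \<in> {a<..<b}" using that by auto
      show "((\<lambda>t. \<sigma> t / R - \<theta> t) has_real_derivative r t / R - k t) (at t)"
        using R by (auto intro!: derivative_eq_intros d\<sigma>[OF tt] d\<theta>[OF tt])
      show "0 \<le> r t / R - k t" using kle[of t] tt unfolding k_def r_def by auto
    qed
    then show ?thesis by (simp add: diff_divide_distrib)
  qed
  have \<theta>a: "\<theta> a = \<theta>0" by (simp add: \<theta>_def)
  have \<theta>b: "\<theta> b - \<theta> a \<le> pi" using tot by (simp add: \<theta>_def k_def)
  have \<sigma>a: "\<sigma> a = 0" by (simp add: \<sigma>_def)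
  have \<sigma>b: "\<sigma> b = integral {a..b} (\<lambda>t. sqrt(x t^2+y t^2))" by (simp add: \<sigma>_def r_def)
  define X where "X = (\<lambda>t. x t / r t)"
  define Y where "Y = (\<lambda>t. y t / r t)"
  have dr: "(r has_real_derivative (x t*x2 t + y t*y2 t)/r t) (at t)" if tt: "t\<in>{a<..<b}" for t
  proof -
    have tc: "t \<in> {a..b}" using tt by auto
    show ?thesis unfolding r_def
      using nz[OF tc] dx[OF tt] dy[OF tt]
      by (auto intro!: derivative_eq_intros simp: field_split_simps)
  qed
  have dX: "(X has_real_derivative - k t * Y t) (at t)" if tt: "t\<in>{a<..<b}" for t
  proof -
    have tc: "t \<in> {a..b}" using tt by auto
    have "(X has_real_derivative (x2 t * r t - x t * ((x t*x2 t + y t*y2 t)/r t))/(r t * r t)) (at t)"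
      unfolding X_def using rpos[OF tc]
      by (auto intro!: derivative_eq_intros dx[OF tt] dr[OF tt])
    moreover have "(x2 t * r t - x t * ((x t*x2 t + y t*y2 t)/r t))/(r t * r t) = - k t * Y t"
    proof -
      have rp: "r t > 0" using rpos[OF tc] .
      have rr: "r t * r t = x t * x t + y t * y t" using r2[OF tc] by (simp add: power2_eq_square)
      have kt: "k t = (x t*y2 t - y t*x2 t)/(r t * r t)" unfolding k_def using rr by (simp add: power2_eq_square)
      have e1: "(x2 t * r t - x t * ((x t*x2 t + y t*y2 t)/r t))/(r t * r t)
          = (x2 t * (r t * r t) - x t * (x t*x2 t + y t*y2 t))/(r t * r t * r t)"
        using rp by (simp add: field_simps)
      have e2: "x2 t * (r t * r t) - x t * (x t*x2 t + y t*y2 t) = - (x t*y2 t - y t*x2 t) * y t"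
        using rr by algebra
      have e3: "- k t * Y t = - (x t*y2 t - y t*x2 t) * y t / (r t * r t * r t)"
        unfolding kt Y_def using rp by (simp add: field_simps)
      show ?thesis using e1 e2 e3 by simp
    qed
    ultimately show ?thesis by simp
  qed
  have dY: "(Y has_real_derivative k t * X t) (at t)" if tt: "t\<in>{a<..<b}" for t
  proof -
    have tc: "t \<in> {a..b}" using tt by auto
    have "(Y has_real_derivative (y2 t * r t - y t * ((x t*x2 t + y t*y2 t)/r t))/(r t * r t)) (at t)"
      unfolding Y_def using rpos[OF tc]
      by (auto intro!: derivative_eq_intros dy[OF tt] dr[OF tt])
    moreover have "(y2 t * r t - y t * ((x t*x2 t + y t*y2 t)/r t))/(r t * r t) = k t * X t"
    proof -
      have rp: "r t > 0" using rpos[OF tc] .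
      have rr: "r t * r t = x t * x t + y t * y t" using r2[OF tc] by (simp add: power2_eq_square)
      have kt: "k t = (x t*y2 t - y t*x2 t)/(r t * r t)" unfolding k_def using rr by (simp add: power2_eq_square)
      have e1: "(y2 t * r t - y t * ((x t*x2 t + y t*y2 t)/r t))/(r t * r t)
          = (y2 t * (r t * r t) - y t * (x t*x2 t + y t*y2 t))/(r t * r t * r t)"
        using rp by (simp add: field_simps)
      have e2: "y2 t * (r t * r t) - y t * (x t*x2 t + y t*y2 t) = (x t*y2 t - y t*x2 t) * x t"
        using rr by algebra
      have e3: "k t * X t = (x t*y2 t - y t*x2 t) * x t / (r t * r t * r t)"
        unfolding kt X_def using rp by (simp add: field_simps)
      show ?thesis using e1 e2 e3 by simp
    qed
    ultimately show ?thesis by simp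
  qed
  define \<Phi> where "\<Phi> = (\<lambda>t. (X t - cos (\<theta> t))^2 + (Y t - sin (\<theta> t))^2)"
  have rnz: "\<forall>t\<in>{a..b}. r t \<noteq> 0" using rpos by force
  have c\<Phi>: "continuous_on {a..b} \<Phi>" unfolding \<Phi>_def X_def Y_def
    by (intro continuous_intros cx cy cr c\<theta> rnz)
  have d\<Phi>: "(\<Phi> has_real_derivative 0) (at t)" if tt: "a < t" "t < b" for t
  proof -
    have tt': "t\<in>{a<..<b}" using tt by auto
    have "(\<Phi> has_real_derivative 2 * (X t - cos (\<theta> t)) * (- k t * Y t + sin (\<theta> t) * k t)
         + 2 * (Y t - sin (\<theta> t)) * (k t * X t - cos (\<theta> t) * k t)) (at t)"
      unfolding \<Phi>_def
      by (auto intro!: derivative_eq_intros dX[OF tt'] dY[OF tt'] d\<theta>[OF tt'] simp: algebra_simps)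
    moreover have "2 * (X t - cos (\<theta> t)) * (- k t * Y t + sin (\<theta> t) * k t)
         + 2 * (Y t - sin (\<theta> t)) * (k t * X t - cos (\<theta> t) * k t) = 0"
      by (simp add: algebra_simps)
    ultimately show ?thesis by simp
  qed
  have \<Phi>0: "\<Phi> t = 0" if "t \<in> {a..b}" for t
  proof -
    have "\<Phi> t = \<Phi> a" using that by (intro DERIV_isconst2[OF ab c\<Phi> d\<Phi>]) auto
    also have "\<Phi> a = 0" unfolding \<Phi>_def X_def Y_def using th0 \<theta>a by simp
    finally show ?thesis .
  qed
  have rep: "x t = r t * cos (\<theta> t) \<and> y t = r t * sin (\<theta> t)" if tc: "t \<in> {a..b}" for t
  proof -
    have "(X t - cos (\<theta> t))^2 + (Y t - sin (\<theta> t))^2 = 0" using \<Phi>0[OF tc] unfolding \<Phi>_def .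
    then have "X t = cos (\<theta> t) \<and> Y t = sin (\<theta> t)" by (simp add: sum_power2_eq_zero_iff)
    then show ?thesis using rpos[OF tc] unfolding X_def Y_def by (simp add: field_simps)
  qed
  have cross: "x s * y u - y s * x u = r s * r u * sin (\<theta> u - \<theta> s)" if "s \<in> {a..b}" "u \<in> {a..b}" for s u
  proof -
    have "x s*y u - y s*x u = r s*r u*(sin (\<theta> u) * cos (\<theta> s) - cos (\<theta> u) * sin (\<theta> s))"
      using rep[OF that(1)] rep[OF that(2)] by (simp add: algebra_simps)
    then show ?thesis by (simp add: sin_diff)
  qed
  have key: "0 < x s * y u - y s * x u \<and> x s * y u - y s * x u < r u * (\<sigma> u - \<sigma> s) * r s / R"
    if st: "t1 < s" "s < u" "u < t3" for s u
  proof -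
    have sc: "s \<in> {a..b}" and uc: "u \<in> {a..b}" using st t by auto
    have p0: "0 < \<theta> u - \<theta> s" using \<theta>_lt[of s u] st t by auto
    have "\<theta> a < \<theta> s" using \<theta>_lt[of a s] st t by auto
    moreover have "\<theta> u < \<theta> b" using \<theta>_lt[of u b] st t by auto
    ultimately have ppi: "\<theta> u - \<theta> s < pi" using \<theta>b by linarith
    have sinpos: "0 < sin (\<theta> u - \<theta> s)" using sin_gt_zero[OF p0 ppi] .
    have sinlt: "sin (\<theta> u - \<theta> s) < \<theta> u - \<theta> s" using sin_lt[OF p0] .
    have ple: "\<theta> u - \<theta> s \<le> (\<sigma> u - \<sigma> s)/R" using \<theta>\<sigma>[of s u] st t by auto
    have rr: "0 < r s * r u" using rpos[OF sc] rpos[OF uc] by simp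
    have "r s * r u * sin (\<theta> u - \<theta> s) < r s * r u * ((\<sigma> u - \<sigma> s)/R)"
      using rr sinlt ple by (intro mult_strict_left_mono) auto
    moreover have "r s * r u * ((\<sigma> u - \<sigma> s)/R) = r u * (\<sigma> u - \<sigma> s) * r s / R" by (simp add: algebra_simps)
    moreover have "0 < r s * r u * sin (\<theta> u - \<theta> s)" using rr sinpos by simp
    ultimately show ?thesis using cross[OF sc uc] by linarith
  qed
  have Gstep: "0 < (p t2 - p t1)*y u - (q t2 - q t1)*x u \<and>
     (p t2 - p t1)*y u - (q t2 - q t1)*x u < r u*((\<sigma> u - \<sigma> t1)^2 - (\<sigma> u - \<sigma> t2)^2)/(2*R)"
    if ut: "t2 < u" "u < t3" for u
  proof -
    define G where "G = (\<lambda>s. (p s - p t1)*y u - (q s - q t1)*x u)"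
    have sub: "{t1..t2} \<subseteq> {a..b}" using t by auto
    have cG: "continuous_on {t1..t2} G" unfolding G_def
      by (intro continuous_intros continuous_on_subset[OF cp sub] continuous_on_subset[OF cq sub])
    have dG: "(G has_real_derivative x s * y u - y s * x u) (at s)" if "t1 < s" "s < t2" for s
    proof -
      have ss: "s \<in> {a<..<b}" using that t by auto
      show ?thesis unfolding G_def by (auto intro!: derivative_eq_intros dp[OF ss] dq[OF ss])
    qed
    have "G t1 < G t2" using key ut by (intro incr_strict[OF t(2) cG dG]) auto
    then have g1: "0 < G t2" by (simp add: G_def)
    define H where "H = (\<lambda>s. r u*((\<sigma> u - \<sigma> t1)^2 - (\<sigma> u - \<sigma> s)^2)/(2*R) - G s)"
    have cH: "continuous_on {t1..t2} H" unfolding H_def using R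
      by (intro continuous_intros cG continuous_on_subset[OF c\<sigma> sub]) auto
    have dH: "(H has_real_derivative r u * (\<sigma> u - \<sigma> s) * r s / R - (x s * y u - y s * x u)) (at s)"
      if "t1 < s" "s < t2" for s
    proof -
      have ss: "s \<in> {a<..<b}" using that t by auto
      show ?thesis unfolding H_def using R
        by (auto intro!: derivative_eq_intros dG[OF that] d\<sigma>[OF ss] simp: field_simps)
    qed
    have "H t1 < H t2" using key ut by (intro incr_strict[OF t(2) cH dH]) auto
    then have g2: "G t2 < r u*((\<sigma> u - \<sigma> t1)^2 - (\<sigma> u - \<sigma> t2)^2)/(2*R)" by (simp add: H_def G_def)
    show ?thesis using g1 g2 by (simp add: G_def)
  qed
  define F where "F = (\<lambda>u. (p t2 - p t1)*(q u - q t2) - (q t2 - q t1)*(p u - p t2))"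
  have sub: "{t2..t3} \<subseteq> {a..b}" using t by auto
  have cF: "continuous_on {t2..t3} F" unfolding F_def
    by (intro continuous_intros continuous_on_subset[OF cp sub] continuous_on_subset[OF cq sub])
  have dF: "(F has_real_derivative (p t2 - p t1)*y u - (q t2 - q t1)*x u) (at u)" if "t2 < u" "u < t3" for u
  proof -
    have ss: "u \<in> {a<..<b}" using that t by auto
    show ?thesis unfolding F_def by (auto intro!: derivative_eq_intros dp[OF ss] dq[OF ss])
  qed
  have "F t2 < F t3" using Gstep by (intro incr_strict[OF t(3) cF dF]) auto
  then have f1: "0 < F t3" by (simp add: F_def)
  define K where "K = (\<lambda>u. ((\<sigma> u - \<sigma> t1)^3 - (\<sigma> u - \<sigma> t2)^3)/(6*R) - F u)"
  have cK: "continuous_on {t2..t3} K" unfolding K_def using R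
    by (intro continuous_intros cF continuous_on_subset[OF c\<sigma> sub]) auto
  have dK: "(K has_real_derivative r u*((\<sigma> u - \<sigma> t1)^2 - (\<sigma> u - \<sigma> t2)^2)/(2*R)
      - ((p t2 - p t1)*y u - (q t2 - q t1)*x u)) (at u)" if "t2 < u" "u < t3" for u
  proof -
    have ss: "u \<in> {a<..<b}" using that t by auto
    show ?thesis unfolding K_def using R
      by (auto intro!: derivative_eq_intros dF[OF that] d\<sigma>[OF ss] simp: field_simps)
  qed
  have "K t2 < K t3" using Gstep by (intro incr_strict[OF t(3) cK dK]) auto
  then have f2: "F t3 < ((\<sigma> t3 - \<sigma> t1)^3 - (\<sigma> t3 - \<sigma> t2)^3 - (\<sigma> t2 - \<sigma> t1)^3)/(6*R)"
    by (simp add: K_def F_def diff_divide_distrib)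
  define l1 where "l1 = \<sigma> t2 - \<sigma> t1"
  define l2 where "l2 = \<sigma> t3 - \<sigma> t2"
  have l1p: "0 < l1" using \<sigma>_lt[of t1 t2] t by (simp add: l1_def)
  have l2p: "0 < l2" using \<sigma>_lt[of t2 t3] t by (simp add: l2_def)
  have "\<sigma> a \<le> \<sigma> t1" using \<sigma>_lt[of a t1] t by (cases "a = t1") auto
  moreover have "\<sigma> t3 \<le> \<sigma> b" using \<sigma>_lt[of t3 b] t by (cases "t3 = b") auto
  ultimately have lL: "l1 + l2 \<le> \<sigma> b" using \<sigma>a by (simp add: l1_def l2_def)
  have "((\<sigma> t3 - \<sigma> t1)^3 - (\<sigma> t3 - \<sigma> t2)^3 - (\<sigma> t2 - \<sigma> t1)^3)/(6*R) = l1*l2*(l1+l2)/(2*R)"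
  proof -
    have "\<sigma> t3 - \<sigma> t1 = l1 + l2" by (simp add: l1_def l2_def)
    then have "(\<sigma> t3 - \<sigma> t1)^3 - (\<sigma> t3 - \<sigma> t2)^3 - (\<sigma> t2 - \<sigma> t1)^3 = 3 * (l1*l2*(l1+l2))"
      by (simp add: l1_def[symmetric] l2_def[symmetric]) (simp add: power3_eq_cube algebra_simps)
    then show ?thesis by simp
  qed
  also have "\<dots> \<le> (\<sigma> b)^3/(8*R)" by (rule alg_bound[OF l1p l2p lL R])
  finally have "F t3 < (\<sigma> b)^3/(8*R)" using f2 by linarith
  then show ?thesis using f1 \<sigma>b by (simp add: F_def)
qed


lemma comp_deriv: "((f::real\<Rightarrow>real^'n) has_vector_derivative f') F \<Longrightarrow> ((\<lambda>t. f t $ i) has_real_derivative (f' $ i)) F"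
  unfolding has_real_derivative_iff_has_vector_derivative
  by (rule bounded_linear.has_vector_derivative[OF bounded_linear_vec_nth])

lemma norm2: "norm (v::real^2) = sqrt ((v$1)^2 + (v$2)^2)"
  by (simp add: norm_vec_def L2_set_def UNIV_2)

lemma cube_powr: assumes "c > 0" shows "(c powr (1/3))^3 = (c::real)"
proof -
  have "(c powr (1/3))^3 = (c powr (1/3)) powr (real 3)"
    using assms by (simp add: powr_realpow)
  also have "\<dots> = c" using assms by (simp add: powr_powr)
  finally show ?thesis .
qed

lemma three_points:
  fixes \<gamma> :: "real \<Rightarrow> real^2" and a b R\<^sub>1 :: real and v0 v1 v2 :: "real^2"
  assumes cc: "convex_curve \<gamma> a b"
    and R: "R\<^sub>1 > 0"
    and rad: "\<forall>t\<in>{a..b}. 1 / curvature \<gamma> a b t \<ge> R\<^sub>1"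
    and tot: "total_curvature \<gamma> a b \<le> pi"
    and dv: "det2 v1 v2 \<noteq> 0"
    and len: "curve_length \<gamma> a b / ((lattice_invariant v1 v2 * R\<^sub>1) powr (1/3)) \<le> 2"
    and t: "a \<le> t1" "t1 < t2" "t2 < t3" "t3 \<le> b"
    and lat: "\<gamma> t1 \<in> lattice v0 v1 v2" "\<gamma> t2 \<in> lattice v0 v1 v2" "\<gamma> t3 \<in> lattice v0 v1 v2"
  shows False
proof -
  define g1 where "g1 = vd1 \<gamma> a b"
  define g2 where "g2 = vd2 \<gamma> a b"
  have C2: "C2_regular_curve \<gamma> a b" and kp: "\<forall>t\<in>{a..b}. curvature \<gamma> a b t > 0"
    using cc unfolding convex_curve_def by auto
  have ab: "a < b" using C2 unfolding C2_regular_curve_def by auto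
  have dgw: "\<forall>t\<in>{a..b}. (\<gamma> has_vector_derivative g1 t) (at t within {a..b})"
    using C2 unfolding C2_regular_curve_def g1_def vd1_def by (auto simp: vector_derivative_works)
  have dg1w: "\<forall>t\<in>{a..b}. (g1 has_vector_derivative g2 t) (at t within {a..b})"
    using C2 unfolding C2_regular_curve_def g1_def g2_def vd2_def by (auto simp: vector_derivative_works)
  have cg2: "continuous_on {a..b} g2" using C2 unfolding C2_regular_curve_def g2_def by auto
  have g1nz: "\<forall>t\<in>{a..b}. g1 t \<noteq> 0" using C2 unfolding C2_regular_curve_def g1_def by auto
  have cg: "continuous_on {a..b} \<gamma>" by (rule within_cont[OF dgw])
  have cg1: "continuous_on {a..b} g1" by (rule within_cont[OF dg1w])
  define p where "p = (\<lambda>t. \<gamma> t $ 1)"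
  define q where "q = (\<lambda>t. \<gamma> t $ 2)"
  define x where "x = (\<lambda>t. g1 t $ 1)"
  define y where "y = (\<lambda>t. g1 t $ 2)"
  define x2 where "x2 = (\<lambda>t. g2 t $ 1)"
  define y2 where "y2 = (\<lambda>t. g2 t $ 2)"
  have nrm: "norm (g1 t) = sqrt (x t^2 + y t^2)" for t by (simp add: norm2 x_def y_def)
  have dt: "det2 (g1 t) (g2 t) = x t * y2 t - y t * x2 t" for t by (simp add: det2_def x_def y_def x2_def y2_def)
  have curv: "curvature \<gamma> a b t = (x t * y2 t - y t * x2 t) / (sqrt (x t^2 + y t^2))^3" for t
    unfolding curvature_def g1_def[symmetric] g2_def[symmetric] dt nrm ..
  have nz: "x t^2 + y t^2 > 0" if "t \<in> {a..b}" for t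
  proof -
    have "norm (g1 t) > 0" using g1nz that by auto
    then show ?thesis unfolding nrm by (metis real_sqrt_gt_0_iff)
  qed
  have kpos: "0 < x t*y2 t - y t*x2 t" if "t \<in> {a..b}" for t
  proof -
    have "0 < (x t * y2 t - y t * x2 t) / (sqrt (x t^2 + y t^2))^3" using kp that curv by auto
    moreover have "(sqrt (x t^2 + y t^2))^3 > 0" using nz[OF that] by simp
    ultimately show ?thesis by (simp add: zero_less_divide_iff)
  qed
  have kr: "(x t*y2 t - y t*x2 t)/(x t^2+y t^2) = curvature \<gamma> a b t * sqrt (x t^2 + y t^2)" for t
  proof (cases "x t^2 + y t^2 = 0")
    case True then show ?thesis by (simp add: curv)
  next
    case False
    have "0 \<le> x t^2 + y t^2" by simp
    then have "0 < x t^2 + y t^2" using False by linarith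
    define n where "n = sqrt (x t^2 + y t^2)"
    have np: "n > 0" unfolding n_def using \<open>0 < x t^2 + y t^2\<close> by simp
    have n2: "x t^2 + y t^2 = n^2" unfolding n_def by simp
    have e: "(x t*y2 t - y t*x2 t) / n^2 = (x t*y2 t - y t*x2 t) / n^3 * n"
      using np by (simp add: field_simps power3_eq_cube power2_eq_square)
    show ?thesis unfolding curv n_def[symmetric] by (subst n2) (rule e)
  qed
  have kle: "(x t*y2 t - y t*x2 t)/(x t^2+y t^2) \<le> sqrt(x t^2+y t^2)/R\<^sub>1" if tc: "t \<in> {a..b}" for t
  proof -
    have k0: "curvature \<gamma> a b t > 0" using kp tc by auto
    have "R\<^sub>1 \<le> 1 / curvature \<gamma> a b t" using rad tc by auto
    then have "curvature \<gamma> a b t \<le> 1 / R\<^sub>1" using k0 R by (simp add: field_simps)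
    then have "curvature \<gamma> a b t * sqrt (x t^2 + y t^2) \<le> 1 / R\<^sub>1 * sqrt (x t^2 + y t^2)"
      by (intro mult_right_mono) auto
    then show ?thesis unfolding kr by simp
  qed
  have tot': "integral {a..b} (\<lambda>t. (x t*y2 t - y t*x2 t)/(x t^2+y t^2)) \<le> pi"
    using tot unfolding total_curvature_def kr g1_def[symmetric] nrm by simp
  have Ldef: "curve_length \<gamma> a b = integral {a..b} (\<lambda>t. sqrt(x t^2+y t^2))"
    unfolding curve_length_def g1_def[symmetric] nrm ..
  have cp: "continuous_on {a..b} p" unfolding p_def by (intro continuous_on_component cg)
  have cq: "continuous_on {a..b} q" unfolding q_def by (intro continuous_on_component cg)
  have cx: "continuous_on {a..b} x" unfolding x_def by (intro continuous_on_component cg1)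
  have cy: "continuous_on {a..b} y" unfolding y_def by (intro continuous_on_component cg1)
  have cx2: "continuous_on {a..b} x2" unfolding x2_def by (intro continuous_on_component cg2)
  have cy2: "continuous_on {a..b} y2" unfolding y2_def by (intro continuous_on_component cg2)
  have dp: "(p has_real_derivative x t) (at t)" if "t\<in>{a<..<b}" for t
    unfolding p_def x_def by (rule comp_deriv[OF within_at[OF dgw that]])
  have dq: "(q has_real_derivative y t) (at t)" if "t\<in>{a<..<b}" for t
    unfolding q_def y_def by (rule comp_deriv[OF within_at[OF dgw that]])
  have dx: "(x has_real_derivative x2 t) (at t)" if "t\<in>{a<..<b}" for t
    unfolding x_def x2_def by (rule comp_deriv[OF within_at[OF dg1w that]])
  have dy: "(y has_real_derivative y2 t) (at t)" if "t\<in>{a<..<b}" for t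
    unfolding y_def y2_def by (rule comp_deriv[OF within_at[OF dg1w that]])
  define D where "D = (p t2 - p t1)*(q t3 - q t2) - (q t2 - q t1)*(p t3 - p t2)"
  define L where "L = curve_length \<gamma> a b"
  have main: "0 < D \<and> D < L^3/(8*R\<^sub>1)"
    unfolding D_def L_def Ldef
    by (rule core[OF ab R cp cq cx cy cx2 cy2 dp dq dx dy nz kpos kle tot' t])
  define A where "A = lattice_invariant v1 v2"
  have Apos: "A > 0" using dv by (simp add: A_def lattice_invariant_def)
  obtain m1 n1 where P1: "\<gamma> t1 = v0 + of_int m1 *\<^sub>R v1 + of_int n1 *\<^sub>R v2" using lat(1) unfolding lattice_def by auto
  obtain m2 n2 where P2: "\<gamma> t2 = v0 + of_int m2 *\<^sub>R v1 + of_int n2 *\<^sub>R v2" using lat(2) unfolding lattice_def by auto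
  obtain m3 n3 where P3: "\<gamma> t3 = v0 + of_int m3 *\<^sub>R v1 + of_int n3 *\<^sub>R v2" using lat(3) unfolding lattice_def by auto
  define kk where "kk = (m2 - m1) * (n3 - n2) - (n2 - n1) * (m3 - m2)"
  have Dk: "D = of_int kk * det2 v1 v2"
  proof -
    have c: "\<And>m n i. (v0 + of_int m *\<^sub>R v1 + of_int n *\<^sub>R v2) $ i = v0 $ i + of_int m * v1 $ i + of_int n * v2 $ i"
      by simp
    show ?thesis unfolding D_def p_def q_def P1 P2 P3 c kk_def det2_def of_int_mult of_int_diff
      by algebra
  qed
  have "kk \<noteq> 0" using main Dk by auto
  then have "\<bar>real_of_int kk\<bar> \<ge> 1" by linarith
  then have "A \<le> \<bar>real_of_int kk\<bar> * A" using Apos by simp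
  also have "\<dots> = \<bar>D\<bar>" unfolding Dk A_def lattice_invariant_def by (simp add: abs_mult)
  also have "\<dots> = D" using main by simp
  finally have AD: "A \<le> D" .
  have "0 < L^3/(8*R\<^sub>1)" using main by linarith
  then have L3: "0 < L^3" using R by (simp add: zero_less_divide_iff)
  have L0: "L > 0"
  proof (rule ccontr)
    assume "\<not> L > 0"
    then have "L * L^2 \<le> 0" by (simp add: mult_nonpos_nonneg)
    moreover have "L^3 = L * L^2" by (simp add: power3_eq_cube power2_eq_square)
    ultimately show False using L3 by linarith
  qed
  have cpos: "(A * R\<^sub>1) powr (1/3) > 0" using Apos R by simp
  have "L \<le> 2 * (A * R\<^sub>1) powr (1/3)" using len cpos unfolding L_def[symmetric] A_def[symmetric]
    by (simp add: divide_le_eq)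
  then have "L^3 \<le> (2 * (A * R\<^sub>1) powr (1/3))^3" using L0 by (intro power_mono) auto
  also have "\<dots> = 8 * (A * R\<^sub>1)" using cube_powr[of "A*R\<^sub>1"] Apos R by (simp add: power_mult_distrib)
  finally have "L^3/(8*R\<^sub>1) \<le> A" using R by (simp add: field_simps)
  then show False using AD main by linarith
qed

theorem theorem6p1:
  fixes \<gamma> :: "real \<Rightarrow> real^2" and a b R\<^sub>1 :: real and v0 v1 v2 :: "real^2"
  assumes "convex_curve \<gamma> a b"
    and "R\<^sub>1 > 0"
    and "\<forall>t\<in>{a..b}. 1 / curvature \<gamma> a b t \<ge> R\<^sub>1"
    and "total_curvature \<gamma> a b \<le> pi"
    and "det2 v1 v2 \<noteq> 0"
    and "curve_length \<gamma> a b / ((lattice_invariant v1 v2 * R\<^sub>1) powr (1/3)) \<le> 2"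
  shows "finite (\<gamma> ` {a..b} \<inter> lattice v0 v1 v2) \<and> card (\<gamma> ` {a..b} \<inter> lattice v0 v1 v2) \<le> 2"
proof (rule ccontr)
  let ?S = "\<gamma> ` {a..b} \<inter> lattice v0 v1 v2"
  assume "\<not> (finite ?S \<and> card ?S \<le> 2)"
  then obtain T where T: "T \<subseteq> ?S" "card T = 3"
  proof (cases "finite ?S")
    case True
    then have "3 \<le> card ?S" using \<open>\<not> (finite ?S \<and> card ?S \<le> 2)\<close> by auto
    then show ?thesis using obtain_subset_with_card_n that by metis
  next
    case False
    then show ?thesis using infinite_arbitrarily_large[OF False, of 3] that by auto
  qed
  then obtain P Q U where PQU: "T = {P, Q, U}" "P \<noteq> Q" "Q \<noteq> U" "P \<noteq> U" by (auto simp: card_3_iff)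
  obtain s1 where s1: "s1 \<in> {a..b}" "P = \<gamma> s1" "\<gamma> s1 \<in> lattice v0 v1 v2" using T PQU by auto
  obtain s2 where s2: "s2 \<in> {a..b}" "Q = \<gamma> s2" "\<gamma> s2 \<in> lattice v0 v1 v2" using T PQU by auto
  obtain s3 where s3: "s3 \<in> {a..b}" "U = \<gamma> s3" "\<gamma> s3 \<in> lattice v0 v1 v2" using T PQU by auto
  have ne: "s1 \<noteq> s2" "s2 \<noteq> s3" "s1 \<noteq> s3" using PQU s1 s2 s3 by auto
  have F: "False" if "u1 \<in> {a..b}" "u2 \<in> {a..b}" "u3 \<in> {a..b}" "u1 < u2" "u2 < u3"
     "\<gamma> u1 \<in> lattice v0 v1 v2" "\<gamma> u2 \<in> lattice v0 v1 v2" "\<gamma> u3 \<in> lattice v0 v1 v2" for u1 u2 u3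
    using three_points[OF assms, of u1 u2 u3] that by auto
  have o: "s1 < s2 \<or> s2 < s1" "s2 < s3 \<or> s3 < s2" "s1 < s3 \<or> s3 < s1" using ne by auto
  note l = s1(1,3) s2(1,3) s3(1,3)
  show False
  proof (cases "s1 < s2")
    case h1: True
    show False
    proof (cases "s2 < s3")
      case True then show False using F[of s1 s2 s3] h1 l by blast
    next
      case False then have "s3 < s2" using o by blast
      show False
      proof (cases "s1 < s3")
        case True then show False using F[of s1 s3 s2] \<open>s3 < s2\<close> l by blast
      next
        case False then have "s3 < s1" using o by blast
        then show False using F[of s3 s1 s2] h1 l by blast
      qed
    qed
  next
    case False then have h1: "s2 < s1" using o by blast
    show False
    proof (cases "s1 < s3")
      case True then show False using F[of s2 s1 s3] h1 l by blast
    next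
      case False then have "s3 < s1" using o by blast
      show False
      proof (cases "s2 < s3")
        case True then show False using F[of s2 s3 s1] \<open>s3 < s1\<close> l by blast
      next
        case False then have "s3 < s2" using o by blast
        then show False using F[of s3 s2 s1] h1 l by blast
      qed
    qed
  qed
qed

end
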